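(* Let $d\ge3$ be odd and define, for $x\in[-1+\tfrac2d,1]$, $m(x)=\big[\tfrac12(1-\tfrac1d)(1-\tfrac2d+x)\big]^{1/2}+\tfrac1d$. Consider the convex set $$C=\mathrm{conv}\Big\{\Big(\tfrac1d\operatorname{tr}[U\overline U],\ \tfrac1d|\operatorname{tr}U|^2\Big): U\in U(d)\Big\}\subset\mathbb{R}^2.$$ Then the extreme points of $C$ are exactly $(-1+2/d,0)$, $(1,0)$ and the points $\big(x,\,d\,m(x)^2\big)$ for $x\in[-1+2/d,1]$.
   Context: $\overline U$ is the entrywise complex conjugate. With $\mathbb{F}$ the flip on $\mathbb{C}^d\otimes\mathbb{C}^d$, $\hat{\mathbb{F}}=d|\Omega\rangle\langle\Omega|$, $|\Omega\rangle=d^{-1/2}\sum_j|jj\rangle$, the pair $(\frac1d\operatorname{tr}[U\overline U],\frac1d|\operatorname{tr}U|^2)$ equals the expectation values $(\operatorname{tr}[\rho\mathbb{F}],\operatorname{tr}[\rho\hat{\mathbb{F}}])$ in the state $\rho=(\mathbb{1}\otimes U)|\Omega\rangle\langle\Omega|(\mathbb{1}\otimes U^\dagger)$, so $C$ is the coordinate image of the $O(d)$-covariant mixtures of unitary channels. *)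

theory Defs
  imports "HOL-Analysis.Analysis"
begin

text \<open>Complex d x d matrices indexed by a finite type 'n, with d = CARD('n).\<close>

definition mtrace :: "complex^'n^'n \<Rightarrow> complex" where
  "mtrace A = (\<Sum>i\<in>UNIV. A $ i $ i)"

definition mconj :: "complex^'n^'n \<Rightarrow> complex^'n^'n" where
  "mconj A = (\<chi> i j. cnj (A $ i $ j))"

definition madj :: "complex^'n^'n \<Rightarrow> complex^'n^'n" where
  "madj A = (\<chi> i j. cnj (A $ j $ i))"

definition unitary :: "complex^'n^'n \<Rightarrow> bool" where
  "unitary U \<longleftrightarrow> U ** madj U = mat 1 \<and> madj U ** U = mat 1"

text \<open>The point (tr[U conj U]/d, |tr U|^2/d); tr[U conj U] is real, we take its real part.\<close>
definition upoint :: "complex^'n^'n \<Rightarrow> real \<times> real" where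
  "upoint U = (Re (mtrace (U ** mconj U)) / real CARD('n),
               (cmod (mtrace U))\<^sup>2 / real CARD('n))"

definition mfun :: "real \<Rightarrow> real \<Rightarrow> real" where
  "mfun d x = sqrt ((1/2) * (1 - 1/d) * (1 - 2/d + x)) + 1/d"

end

theory Submission
  imports Defs
begin


definition hdot :: "complex^'n \<Rightarrow> complex^'n \<Rightarrow> complex" where
  "hdot x y = (\<Sum>i\<in>UNIV. cnj (x$i) * y$i)"

definition vn2 :: "complex^'n \<Rightarrow> real" where
  "vn2 x = (\<Sum>i\<in>UNIV. (cmod (x$i))\<^sup>2)"

definition fro :: "complex^'n^'n \<Rightarrow> real" where
  "fro X = (\<Sum>i\<in>UNIV. \<Sum>j\<in>UNIV. (cmod (X$i$j))\<^sup>2)"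

lemma cnj_mult_self: "cnj z * z = complex_of_real ((cmod z)\<^sup>2)"
  by (metis complex_norm_square mult.commute)

lemma hdot_self: "hdot x x = complex_of_real (vn2 x)"
  by (simp add: hdot_def vn2_def cnj_mult_self)

lemma vn2_nonneg: "vn2 x \<ge> 0"
  by (simp add: vn2_def sum_nonneg)

lemma hdot_madj: "hdot (A *v x) y = hdot x (madj A *v y)"
proof -
  have "hdot (A *v x) y = (\<Sum>i\<in>UNIV. \<Sum>j\<in>UNIV. cnj (A$i$j) * cnj (x$j) * y$i)"
    by (simp add: hdot_def matrix_vector_mult_def sum_distrib_right)
  also have "\<dots> = (\<Sum>j\<in>UNIV. \<Sum>i\<in>UNIV. cnj (A$i$j) * cnj (x$j) * y$i)"
    by (rule sum.swap)
  also have "\<dots> = hdot x (madj A *v y)"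
    by (simp add: hdot_def matrix_vector_mult_def madj_def sum_distrib_left mult_ac)
  finally show ?thesis .
qed

lemma unitary_vn2:
  assumes "unitary U" shows "vn2 (U *v x) = vn2 x"
proof -
  have "complex_of_real (vn2 (U *v x)) = hdot (U *v x) (U *v x)" by (simp add: hdot_self)
  also have "\<dots> = hdot x ((madj U ** U) *v x)" by (simp add: hdot_madj matrix_vector_mul_assoc)
  also have "\<dots> = complex_of_real (vn2 x)" using assms by (simp add: unitary_def hdot_self)
  finally show ?thesis by simp
qed

lemma mtrace_comm: "mtrace (A ** B) = mtrace (B ** A)"
proof -
  have "mtrace (A ** B) = (\<Sum>i\<in>UNIV. \<Sum>k\<in>UNIV. A$i$k * B$k$i)"
    by (simp add: mtrace_def matrix_matrix_mult_def)
  also have "\<dots> = (\<Sum>k\<in>UNIV. \<Sum>i\<in>UNIV. B$k$i * A$i$k)"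
    by (subst sum.swap) (simp add: mult.commute)
  also have "\<dots> = mtrace (B ** A)" by (simp add: mtrace_def matrix_matrix_mult_def)
  finally show ?thesis .
qed

lemma madj_mult: "madj (A ** B) = madj B ** madj A"
  by (simp add: vec_eq_iff madj_def matrix_matrix_mult_def mult.commute)

lemma madj_madj[simp]: "madj (madj A) = A"
  by (simp add: vec_eq_iff madj_def)

lemma fro_trace: "complex_of_real (fro X) = mtrace (X ** madj X)"
  by (simp only: fro_def mtrace_def of_real_sum complex_norm_square) (simp add: matrix_matrix_mult_def madj_def)

lemma unitary_conj_trace:
  assumes "unitary W" shows "mtrace (madj W ** X ** W) = mtrace X"
proof -
  have "mtrace (madj W ** X ** W) = mtrace (W ** (madj W ** X))"
    by (rule mtrace_comm)
  also have "W ** (madj W ** X) = X" using assms unfolding unitary_def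
    by (simp only: matrix_mul_assoc matrix_mul_lid)
  finally show ?thesis by simp
qed

lemma unitary_conj_fro:
  assumes "unitary W" shows "fro (madj W ** X ** W) = fro X"
proof -
  have "complex_of_real (fro (madj W ** X ** W)) =
        mtrace ((madj W ** X ** W) ** (madj W ** madj X ** W))"
    by (simp add: fro_trace madj_mult matrix_mul_assoc)
  also have "\<dots> = mtrace (madj W ** (X ** madj X) ** W)"
  proof -
    have "(madj W ** X ** W) ** (madj W ** madj X ** W) = madj W ** X ** (W ** madj W) ** madj X ** W"
      by (simp only: matrix_mul_assoc)
    also have "\<dots> = madj W ** (X ** madj X) ** W"
      using assms unfolding unitary_def by (simp only: matrix_mul_assoc matrix_mul_rid)
    finally show ?thesis by simp
  qed
  also have "\<dots> = complex_of_real (fro X)" using assms by (simp add: unitary_conj_trace fro_trace)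
  finally show ?thesis by simp
qed

lemma odd_antisym_kernel:
  fixes A :: "complex^'n^'n"
  assumes "odd CARD('n)" and "\<And>i j. A$j$i = - A$i$j"
  shows "\<exists>x. x \<noteq> 0 \<and> A *v x = 0"
proof -
  have tr: "transpose A = (\<chi> i. (-1::complex) *s row i A)"
  proof (clarsimp simp: vec_eq_iff transpose_def row_def)
    fix i j show "A$j$i = - A$i$j" by (rule assms(2))
  qed
  have "det A = det (transpose A)" by simp
  also have "\<dots> = (\<Prod>i\<in>(UNIV::'n set). (-1::complex)) * det (\<chi> i. row i A)"
    unfolding tr using det_rows_mul[of "\<lambda>i::'n. -1" "\<lambda>i. row i A"] by simp
  also have "(\<chi> i. row i A) = A" by (simp add: vec_eq_iff row_def)
  also have "(\<Prod>i\<in>(UNIV::'n set). (-1::complex)) = -1" using assms(1) by simp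
  finally have "det A = 0" by simp
  hence "\<not> inj ((*v) A)"
    using det_nz_iff_inj_gen[OF matrix_vector_mul_linear_gen, of A] by simp
  then obtain x y where "x \<noteq> y" "A *v x = A *v y" by (auto simp: inj_def)
  hence "x - y \<noteq> 0" "A *v (x - y) = 0" by (auto simp: matrix_vector_mult_diff_distrib)
  thus ?thesis by blast
qed

lemma mv_scale: "A *v (c *s x) = c *s (A *v x)"
  for A :: "complex^'n^'n"
  by (simp add: vec_eq_iff matrix_vector_mult_def sum_distrib_left mult_ac)

lemma vn2_scale: "vn2 (c *s x) = (cmod c)\<^sup>2 * vn2 x"
  by (simp add: vn2_def sum_distrib_left norm_mult power_mult_distrib)

lemma unit_kernel:
  fixes A :: "complex^'n^'n"
  assumes "x \<noteq> 0" "A *v x = 0"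
  shows "\<exists>v a. A *v v = 0 \<and> vn2 v = 1 \<and> Im (v$a) = 0"
proof -
  obtain a where xa: "x$a \<noteq> 0" using assms(1) by (auto simp: vec_eq_iff)
  have "(cmod (x$a))\<^sup>2 \<le> vn2 x" unfolding vn2_def
    by (rule member_le_sum) auto
  moreover have "(cmod (x$a))\<^sup>2 > 0" using xa by simp
  ultimately have pos: "vn2 x > 0" by linarith
  define n where "n = sqrt (vn2 x)"
  have n: "n > 0" "n\<^sup>2 = vn2 x" using pos by (auto simp: n_def)
  define c where "c = cnj (x$a) / complex_of_real (cmod (x$a) * n)"
  have cm: "cmod c = 1 / n" using xa n by (simp add: c_def norm_divide norm_mult)
  define v where "v = c *s x"
  have "A *v v = 0" by (simp add: v_def mv_scale assms)
  moreover have "vn2 v = 1" using n cm pos by (simp add: v_def vn2_scale power_divide)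
  moreover have "v$a = cnj (x$a) * x$a / complex_of_real (cmod (x$a) * n)"
    by (simp add: v_def c_def)
  hence "Im (v$a) = 0" by (simp add: cnj_mult_self Im_divide_of_real del: of_real_mult)
  ultimately show ?thesis by blast
qed

lemma hdot_diff_left: "hdot (x - y) z = hdot x z - hdot y z"
  by (simp add: hdot_def algebra_simps sum_subtractf)
lemma hdot_diff_right: "hdot x (y - z) = hdot x y - hdot x z"
  by (simp add: hdot_def algebra_simps sum_subtractf)
lemma hdot_axis_left: "hdot (axis a 1) y = y$a" for y :: "complex^'n"
proof -
  have "\<And>i. cnj ((axis a 1 :: complex^'n)$i) * y$i = (if i = a then y$a else 0)"
    by (simp add: axis_def)
  thus ?thesis by (simp add: hdot_def)
qed
lemma hdot_axis_right: "hdot y (axis a 1) = cnj (y$a)" for y :: "complex^'n"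
proof -
  have "\<And>i. cnj (y$i) * (axis a 1 :: complex^'n)$i = (if i = a then cnj (y$a) else 0)"
    by (simp add: axis_def)
  thus ?thesis by (simp add: hdot_def)
qed

lemma vn2_axis: "vn2 (axis a 1 :: complex^'n) = 1"
proof -
  have "\<And>i. (cmod ((axis a 1 :: complex^'n)$i))\<^sup>2 = (if i = a then 1 else 0)"
    by (simp add: axis_def)
  thus ?thesis by (simp add: vn2_def)
qed

lemma ifmult: "(if P then 1 else 0) * (x::complex) = (if P then x else 0)"
  by simp
lemma multif: "(x::complex) * (if P then 1 else 0) = (if P then x else 0)"
  by simp

lemma madj_mat1: "madj (mat 1 :: complex^'n^'n) = mat 1"
  by (simp add: vec_eq_iff madj_def mat_def)

lemma unitary_mat1: "unitary (mat 1 :: complex^'n^'n)"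
  by (simp add: unitary_def madj_mat1)

lemma unitary_madj: "unitary U \<Longrightarrow> unitary (madj U)"
  by (simp add: unitary_def)

lemma householder:
  fixes v :: "complex^'n"
  assumes v1: "vn2 v = 1" and va: "Im (v$a) = 0"
  shows "\<exists>W. unitary W \<and> W *v axis a 1 = v"
proof (cases "v = axis a 1")
  case True thus ?thesis using unitary_mat1 by (intro exI[of _ "mat 1"]) auto
next
  case False
  define r where "r = Re (v$a)"
  have var: "v$a = complex_of_real r" using va by (simp add: r_def complex_eq_iff)
  define u where "u = axis a 1 - v"
  have "hdot u u = hdot (axis a 1) (axis a 1) - hdot v (axis a 1) - (hdot (axis a 1) v - hdot v v)"
    unfolding u_def hdot_diff_left hdot_diff_right ..
  also have "\<dots> = 2 - 2 * complex_of_real r"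
    using v1 var by (simp add: hdot_axis_left hdot_axis_right hdot_self vn2_axis)
  finally have huu: "hdot u u = 2 - 2 * complex_of_real r" .
  hence vu: "vn2 u = 2 - 2 * r" by (simp add: hdot_self complex_eq_iff)
  have "u \<noteq> 0" using False by (simp add: u_def)
  then obtain b where "u$b \<noteq> 0" by (auto simp: vec_eq_iff)
  hence "(cmod (u$b))\<^sup>2 > 0" by simp
  moreover have "(cmod (u$b))\<^sup>2 \<le> vn2 u" unfolding vn2_def by (rule member_le_sum) auto
  ultimately have r1: "r < 1" using vu by linarith
  define c where "c = complex_of_real (1 / (1 - r))"
  have cnjc: "cnj c = c" by (simp add: c_def)
  have sumu: "(\<Sum>j\<in>UNIV. cnj (u$j) * u$j) = 2 * (1 - complex_of_real r)"
    using huu unfolding hdot_def by (simp add: algebra_simps)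
  have "c * c * (2 * (1 - complex_of_real r)) = complex_of_real (1/(1-r) * (1/(1-r)) * (2*(1-r)))"
    by (simp add: c_def)
  also have "1/(1-r) * (1/(1-r)) * (2*(1-r)) = 2 * (1/(1-r))"
  proof -
    have nz: "1 - r \<noteq> 0" using r1 by simp
    have gen: "\<And>q::real. q \<noteq> 0 \<Longrightarrow> 1/q*(1/q)*(2*q) = 2*(1/q)"
      by (simp add: field_simps)
    show ?thesis by (rule gen[OF nz])
  qed
  finally have c2: "c * c * (2 * (1 - complex_of_real r)) = 2 * c" by (simp add: c_def)
  define H :: "complex^'n^'n" where
    "H = (\<chi> i j. (if i = j then 1 else 0) - c * u$i * cnj (u$j))"
  have adjH: "madj H = H" by (simp add: H_def madj_def vec_eq_iff cnjc)
  have HH: "H ** H = mat 1"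
  proof (clarsimp simp: vec_eq_iff)
    fix i k
    have "(H ** H)$i$k = (\<Sum>j\<in>UNIV. (if i = j then 1 else 0) * (if j = k then 1 else 0))
         - (\<Sum>j\<in>UNIV. (if i = j then 1 else 0) * (c * u$j * cnj (u$k)))
         - (\<Sum>j\<in>UNIV. (c * u$i * cnj (u$j)) * (if j = k then 1 else 0))
         + (c * c * u$i * cnj (u$k)) * (\<Sum>j\<in>UNIV. cnj (u$j) * u$j)"
      by (simp add: H_def matrix_matrix_mult_def algebra_simps sum_subtractf sum.distrib
          sum_distrib_left)
    also have "\<dots> = (if i = k then 1 else 0) - 2 * c * u$i * cnj (u$k)
         + (c * c * (2 * (1 - complex_of_real r))) * u$i * cnj (u$k)"
      unfolding sumu by (simp add: ifmult multif)
    also have "\<dots> = mat 1 $ i $ k" unfolding c2 by (simp add: mat_def)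
    finally show "(H ** H)$i$k = mat 1 $ i $ k" .
  qed
  have "unitary H" using HH adjH by (simp add: unitary_def)
  moreover have "H *v axis a 1 = v"
  proof (clarsimp simp: vec_eq_iff)
    fix i
    have ua: "cnj (u$a) = 1 - complex_of_real r" using var by (simp add: u_def axis_def)
    have "(H *v axis a 1)$i = (if i = a then 1 else 0) - c * u$i * cnj (u$a)"
      by (simp add: H_def matrix_vector_mult_def axis_def if_distrib cong: if_cong)
    also have "c * u$i * cnj (u$a) = u$i" using r1 unfolding ua
      by (simp add: c_def field_simps)
    finally show "(H *v axis a 1)$i = v$i" by (simp add: u_def axis_def)
  qed
  ultimately show ?thesis by blast
qed



lemma re_le_norms: "2 * Re (a * cnj b) \<le> (cmod a)\<^sup>2 + (cmod b)\<^sup>2"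
proof -
  have "0 \<le> (Re a - Re b)\<^sup>2 + (Im a - Im b)\<^sup>2" by simp
  thus ?thesis by (simp only: cmod_power2) (simp add: power2_eq_square algebra_simps)
qed

lemma normsum: "(cmod ((a + b)/2))\<^sup>2 = ((cmod a)\<^sup>2 + (cmod b)\<^sup>2 + 2 * Re (a * cnj b)) / 4"
  by (simp only: cmod_power2) (simp add: power2_eq_square field_simps)

lemma sum4: "(\<Sum>i\<in>I. \<Sum>j\<in>J. (X i j + Y i j + 2 * R i j) / 4) =
   ((\<Sum>i\<in>I. \<Sum>j\<in>J. X i j) + (\<Sum>i\<in>I. \<Sum>j\<in>J. Y i j) + 2 * (\<Sum>i\<in>I. \<Sum>j\<in>J. R i j)) / (4::real)"
proof -
  have "(\<Sum>i\<in>I. \<Sum>j\<in>J. (X i j + Y i j + 2 * R i j) / 4) = (\<Sum>i\<in>I. \<Sum>j\<in>J. (X i j + Y i j + 2 * R i j)) / 4"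
    by (simp add: sum_divide_distrib)
  also have "(\<Sum>i\<in>I. \<Sum>j\<in>J. (X i j + Y i j + 2 * R i j)) = (\<Sum>i\<in>I. \<Sum>j\<in>J. X i j) + (\<Sum>i\<in>I. \<Sum>j\<in>J. Y i j) + 2 * (\<Sum>i\<in>I. \<Sum>j\<in>J. R i j)"
    by (simp add: sum.distrib sum_distrib_left)
  finally show ?thesis .
qed

lemma mv_axis: "(B *v axis a 1)$i = B$i$a" for B :: "complex^'n^'n"
  by (simp add: matrix_vector_mult_def axis_def multif)

lemma main_ineq:
  fixes U :: "complex^'n^'n"
  assumes U: "unitary U" and odd: "odd CARD('n)"
  defines "t \<equiv> Re (mtrace (U ** mconj U))"
  shows "t \<le> real CARD('n)" and "2 - real CARD('n) \<le> t"
    and "cmod (mtrace U) \<le> 1 + sqrt ((real CARD('n) - 1) * (real CARD('n) - 2 + t) / 2)"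
proof -
  let ?d = "real CARD('n)"
  have rows: "(\<Sum>j\<in>UNIV. (cmod (U$i$j))\<^sup>2) = 1" for i
  proof -
    have "(U ** madj U)$i$i = 1" using U by (simp add: unitary_def mat_def)
    hence "(\<Sum>j\<in>UNIV. U$i$j * cnj (U$i$j)) = 1" by (simp add: matrix_matrix_mult_def madj_def)
    hence "complex_of_real (\<Sum>j\<in>UNIV. (cmod (U$i$j))\<^sup>2) = 1"
      by (simp only: of_real_sum complex_norm_square)
    thus ?thesis by (simp only: of_real_eq_1_iff)
  qed
  have froU: "(\<Sum>i\<in>UNIV. \<Sum>j\<in>UNIV. (cmod (U$i$j))\<^sup>2) = ?d" by (simp add: rows)
  have froU': "(\<Sum>i\<in>UNIV. \<Sum>j\<in>UNIV. (cmod (U$j$i))\<^sup>2) = ?d"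
    using froU by (subst sum.swap) simp
  have tdef: "t = (\<Sum>i\<in>UNIV. \<Sum>j\<in>UNIV. Re (U$i$j * cnj (U$j$i)))"
    by (simp add: t_def mtrace_def matrix_matrix_mult_def mconj_def)
  define S :: "complex^'n^'n" where "S = (\<chi> i j. (U$i$j + U$j$i) / 2)"
  have froS: "fro S = (?d + t) / 2"
  proof -
    have "fro S = (\<Sum>i\<in>UNIV. \<Sum>j\<in>UNIV. ((cmod (U$i$j))\<^sup>2 + (cmod (U$j$i))\<^sup>2
                    + 2 * Re (U$i$j * cnj (U$j$i))) / 4)"
      by (simp only: fro_def S_def vec_lambda_beta normsum)
    also have "\<dots> = ((\<Sum>i\<in>UNIV. \<Sum>j\<in>UNIV. (cmod (U$i$j))\<^sup>2)
         + (\<Sum>i\<in>UNIV. \<Sum>j\<in>UNIV. (cmod (U$j$i))\<^sup>2) + 2 * t) / 4"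
      unfolding tdef by (rule sum4)
    also have "\<dots> = (?d + t)/2" unfolding froU froU' by simp
    finally show ?thesis .
  qed
  show t1: "t \<le> ?d"
  proof -
    have "2 * t \<le> (\<Sum>i\<in>UNIV. \<Sum>j\<in>UNIV. (cmod (U$i$j))\<^sup>2 + (cmod (U$j$i))\<^sup>2)"
      unfolding tdef sum_distrib_left by (intro sum_mono re_le_norms)
    also have "\<dots> = 2 * ?d" using froU froU' by (simp add: sum.distrib)
    finally show ?thesis by simp
  qed
  define A :: "complex^'n^'n" where "A = (\<chi> i j. U$i$j - U$j$i)"
  have "\<And>i j. A$j$i = - A$i$j" by (simp add: A_def)
  then obtain x where "x \<noteq> 0" "A *v x = 0" using odd_antisym_kernel[OF odd] by blast
  then obtain v a where v: "A *v v = 0" "vn2 v = 1" "Im (v$a) = 0" using unit_kernel by blast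
  obtain W where W: "unitary W" "W *v axis a 1 = v" using householder[OF v(2,3)] by blast
  have Sv: "S *v v = U *v v"
  proof -
    have "(S *v v)$i = (U *v v)$i - (A *v v)$i / 2" for i
    proof -
      have "(S *v v)$i = (\<Sum>j\<in>UNIV. U$i$j * v$j - (U$i$j - U$j$i) * v$j / 2)"
        by (simp add: S_def matrix_vector_mult_def field_simps)
      also have "\<dots> = (U *v v)$i - (A *v v)$i / 2"
        by (simp add: A_def matrix_vector_mult_def sum_subtractf sum_divide_distrib)
      finally show ?thesis .
    qed
    thus ?thesis using v(1) by (simp add: vec_eq_iff)
  qed
  have vSv: "vn2 (S *v v) = 1" using Sv unitary_vn2[OF U] v(2) by simp
  define B where "B = madj W ** S ** W"
  have trB: "mtrace B = mtrace U"
  proof -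
    have "mtrace B = mtrace S" by (simp add: B_def unitary_conj_trace W(1))
    also have "\<dots> = mtrace U" by (simp add: mtrace_def S_def)
    finally show ?thesis .
  qed
  have froB: "fro B = fro S" by (simp add: B_def unitary_conj_fro W(1))
  have colB: "(\<Sum>i\<in>UNIV. (cmod (B$i$a))\<^sup>2) = 1"
  proof -
    have "B *v axis a 1 = madj W *v (S *v v)"
      by (simp add: B_def W(2) flip: matrix_vector_mul_assoc)
    hence "vn2 (B *v axis a 1) = 1" using unitary_vn2[OF unitary_madj[OF W(1)]] vSv by simp
    thus ?thesis by (simp add: vn2_def mv_axis)
  qed
  have Baa: "cmod (B$a$a) \<le> 1"
  proof -
    have "(cmod (B$a$a))\<^sup>2 \<le> 1" unfolding colB[symmetric] by (rule member_le_sum) auto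
    thus ?thesis by (simp add: power_le_one_iff abs_le_square_iff)
  qed
  have rest: "1 + (\<Sum>j\<in>UNIV-{a}. (cmod (B$j$j))\<^sup>2) \<le> fro S"
  proof -
    have "fro B = (\<Sum>j\<in>UNIV. \<Sum>i\<in>UNIV. (cmod (B$i$j))\<^sup>2)" unfolding fro_def by (rule sum.swap)
    also have "\<dots> = (\<Sum>i\<in>UNIV. (cmod (B$i$a))\<^sup>2) + (\<Sum>j\<in>UNIV-{a}. \<Sum>i\<in>UNIV. (cmod (B$i$j))\<^sup>2)"
      by (simp add: sum.remove)
    finally have "fro B = 1 + (\<Sum>j\<in>UNIV-{a}. \<Sum>i\<in>UNIV. (cmod (B$i$j))\<^sup>2)" using colB by simp
    moreover have "(\<Sum>j\<in>UNIV-{a}. (cmod (B$j$j))\<^sup>2) \<le> (\<Sum>j\<in>UNIV-{a}. \<Sum>i\<in>UNIV. (cmod (B$i$j))\<^sup>2)"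
      by (intro sum_mono member_le_sum) auto
    ultimately show ?thesis using froB by linarith
  qed
  have nn: "0 \<le> (\<Sum>j\<in>UNIV-{a}. (cmod (B$j$j))\<^sup>2)" by (simp add: sum_nonneg)
  have "1 \<le> (?d + t) / 2" using rest nn froS by linarith
  then show t2: "2 - ?d \<le> t" by simp
  have tr: "mtrace U = B$a$a + (\<Sum>j\<in>UNIV-{a}. B$j$j)"
  proof -
    have "mtrace B = B$a$a + (\<Sum>j\<in>UNIV-{a}. B$j$j)"
      unfolding mtrace_def by (rule sum.remove) auto
    thus ?thesis using trB by simp
  qed
  have cardr: "real (card (UNIV - {a} :: 'n set)) = ?d - 1"
    by (simp add: card_Diff_singleton)
  have cs: "(\<Sum>j\<in>UNIV-{a}. cmod (B$j$j))\<^sup>2 \<le> (?d - 1) * (\<Sum>j\<in>UNIV-{a}. (cmod (B$j$j))\<^sup>2)"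
    using Cauchy_Schwarz_ineq_sum[of "\<lambda>j. 1" "\<lambda>j. cmod (B$j$j)" "UNIV-{a}"] cardr by simp
  have d1: "?d - 1 \<ge> 0" by simp
  have "(?d - 1) * (\<Sum>j\<in>UNIV-{a}. (cmod (B$j$j))\<^sup>2) \<le> (?d - 1) * ((?d - 2 + t) / 2)"
    using rest froS d1 by (intro mult_left_mono) auto
  with cs have "(\<Sum>j\<in>UNIV-{a}. cmod (B$j$j))\<^sup>2 \<le> (?d - 1) * (?d - 2 + t) / 2" by simp
  hence sq: "(\<Sum>j\<in>UNIV-{a}. cmod (B$j$j)) \<le> sqrt ((?d - 1) * (?d - 2 + t) / 2)"
    by (rule real_le_rsqrt)
  have "cmod (mtrace U) \<le> cmod (B$a$a) + cmod (\<Sum>j\<in>UNIV-{a}. B$j$j)"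
    unfolding tr by (rule norm_triangle_ineq)
  also have "cmod (\<Sum>j\<in>UNIV-{a}. B$j$j) \<le> (\<Sum>j\<in>UNIV-{a}. cmod (B$j$j))" by (rule norm_sum)
  finally show "cmod (mtrace U) \<le> 1 + sqrt ((?d - 1) * (?d - 2 + t) / 2)"
    using Baa sq by linarith
qed



definition bs :: "nat \<Rightarrow> nat" where
  "bs p = (if p < 3 then 0 else if odd p then p else p - 1)"

definition blk :: "(nat \<Rightarrow> nat \<Rightarrow> complex) \<Rightarrow> (nat \<Rightarrow> nat \<Rightarrow> complex) \<Rightarrow> nat \<Rightarrow> nat \<Rightarrow> complex" where
  "blk M R p q = (if bs p \<noteq> bs q then 0 else if p < 3 then M p q else R (p - bs p) (q - bs q))"

lemma bs_lt3: "p < 3 \<Longrightarrow> bs p = 0" by (simp add: bs_def)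
lemma bs_ge3: "3 \<le> p \<Longrightarrow> 3 \<le> bs p \<and> odd (bs p) \<and> bs p \<le> p \<and> p \<le> bs p + 1"
proof (cases "odd p")
  case True
  assume "3 \<le> p" thus ?thesis using True by (simp add: bs_def)
next
  case False
  assume p: "3 \<le> p"
  hence "p \<noteq> 3" using False by auto
  hence "4 \<le> p" using p by simp
  moreover have "odd (p - 1)" using False p by simp
  ultimately show ?thesis using False by (simp add: bs_def)
qed
lemma bs_add: "3 \<le> p \<Longrightarrow> r < 2 \<Longrightarrow> bs (bs p + r) = bs p"
proof -
  assume p: "3 \<le> p" and r: "r < 2"
  have b: "3 \<le> bs p" "odd (bs p)" using bs_ge3[OF p] by auto
  show ?thesis
  proof (cases "r = 0")
    case True thus ?thesis using b by (simp add: bs_def)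
  next
    case False hence "r = 1" using r by simp
    thus ?thesis using b by (simp add: bs_def)
  qed
qed

lemma blocksum:
  assumes d: "odd d" "3 \<le> d" and p: "p < d" and h: "\<And>r. bs r \<noteq> bs p \<Longrightarrow> h r = 0"
  shows "(\<Sum>r<d. h r) = (if p < 3 then (\<Sum>r<3. h r) else (\<Sum>r<2. h (bs p + r)))"
proof (cases "p < 3")
  case True
  have "(\<Sum>r<d. h r) = (\<Sum>r<3. h r)"
  proof (rule sum.mono_neutral_right)
    show "{..<3} \<subseteq> {..<d}" using d by auto
    show "\<forall>i\<in>{..<d} - {..<3}. h i = 0"
    proof
      fix i assume "i \<in> {..<d} - {..<3}"
      hence "3 \<le> i" by auto
      hence "bs i \<noteq> bs p" using bs_ge3[of i] True by (simp add: bs_lt3)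
      thus "h i = 0" by (rule h)
    qed
  qed simp
  thus ?thesis using True by simp
next
  case False
  let ?b = "bs p"
  have b: "3 \<le> ?b" "odd ?b" "?b \<le> p" "p \<le> ?b + 1" using bs_ge3[of p] False by auto
  have "(\<Sum>r<d. h r) = (\<Sum>r\<in>(\<lambda>r. ?b + r) ` {..<2}. h r)"
  proof (rule sum.mono_neutral_right)
    have "?b + 1 \<noteq> d" using b d by auto
    hence "?b + 1 < d" using b p by simp
    thus "(\<lambda>r. ?b + r) ` {..<2} \<subseteq> {..<d}" by auto
    show "\<forall>i\<in>{..<d} - (\<lambda>r. ?b + r) ` {..<2}. h i = 0"
    proof
      fix i assume i: "i \<in> {..<d} - (\<lambda>r. ?b + r) ` {..<2}"
      show "h i = 0"
      proof (rule h)
        show "bs i \<noteq> ?b"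
        proof
          assume e: "bs i = ?b"
          hence "3 \<le> i" using b by (cases "i < 3") (auto simp: bs_lt3)
          hence "i = ?b \<or> i = ?b + 1" using bs_ge3[of i] e by auto
          thus False using i by force
        qed
      qed
    qed
  qed simp
  also have "\<dots> = (\<Sum>r<2. h (?b + r))" by (simp add: sum.reindex)
  finally show ?thesis using False by simp
qed

lemma blk_row:
  assumes d: "odd d" "3 \<le> d" and p: "p < d" and q: "q < d"
    and MU: "\<And>p q. p < 3 \<Longrightarrow> q < 3 \<Longrightarrow> (\<Sum>r<3. M p r * cnj (M' q r)) = (if p = q then 1 else 0)"
    and RU: "\<And>p q. p < 2 \<Longrightarrow> q < 2 \<Longrightarrow> (\<Sum>r<2. R p r * cnj (R' q r)) = (if p = q then 1 else 0)"
  shows "(\<Sum>r<d. blk M R p r * cnj (blk M' R' q r)) = (if p = q then 1 else 0)"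
proof -
  have "(\<Sum>r<d. blk M R p r * cnj (blk M' R' q r)) =
     (if p < 3 then (\<Sum>r<3. blk M R p r * cnj (blk M' R' q r))
      else (\<Sum>r<2. blk M R p (bs p + r) * cnj (blk M' R' q (bs p + r))))"
    by (rule blocksum[OF d p]) (simp add: blk_def)
  also have "\<dots> = (if p = q then 1 else 0)"
  proof (cases "p < 3")
    case True
    show ?thesis
    proof (cases "q < 3")
      case True
      have "(\<Sum>r<3. blk M R p r * cnj (blk M' R' q r)) = (\<Sum>r<3. M p r * cnj (M' q r))"
        using \<open>p<3\<close> True by (intro sum.cong) (auto simp: blk_def bs_lt3)
      thus ?thesis using MU[OF \<open>p<3\<close> True] \<open>p<3\<close> by simp
    next
      case False
      have "(\<Sum>r<3. blk M R p r * cnj (blk M' R' q r)) = 0"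
        using \<open>p<3\<close> False bs_ge3[of q] by (intro sum.neutral) (auto simp: blk_def bs_lt3)
      thus ?thesis using \<open>p<3\<close> False by auto
    qed
  next
    case False
    let ?b = "bs p"
    have b: "3 \<le> ?b" "odd ?b" "?b \<le> p" "p \<le> ?b + 1" using bs_ge3[of p] False by auto
    have bb: "\<And>r. r < 2 \<Longrightarrow> bs (?b + r) = ?b" using bs_add False by simp
    show ?thesis
    proof (cases "bs q = ?b")
      case True
      have q3: "\<not> q < 3" using True b by (auto simp: bs_lt3)
      have "(\<Sum>r<2. blk M R p (?b + r) * cnj (blk M' R' q (?b + r))) =
            (\<Sum>r<2. R (p - ?b) r * cnj (R' (q - ?b) r))"
        using False q3 True bb by (intro sum.cong) (auto simp: blk_def)
      also have "\<dots> = (if p - ?b = q - ?b then 1 else 0)"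
        using b bs_ge3[of q] q3 True by (intro RU) auto
      also have "(p - ?b = q - ?b) = (p = q)" using b bs_ge3[of q] q3 True by auto
      finally show ?thesis using False by simp
    next
      case False
      have "(\<Sum>r<2. blk M R p (?b + r) * cnj (blk M' R' q (?b + r))) = 0"
        using False bb by (intro sum.neutral) (auto simp: blk_def)
      moreover have "p \<noteq> q" using False by auto
      ultimately show ?thesis using \<open>\<not> p < 3\<close> by simp
    qed
  qed
  finally show ?thesis .
qed

lemma blk_trans: "blk M R r p = blk (\<lambda>p q. M q p) (\<lambda>p q. R q p) p r"
proof -
  have "bs p = bs r \<Longrightarrow> (p < 3) = (r < 3)"
    using bs_ge3[of p] bs_ge3[of r] by (cases "p < 3"; cases "r < 3") (auto simp: bs_lt3)
  thus ?thesis by (auto simp: blk_def)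
qed

lemma outer_sum:
  fixes k :: nat and G :: "nat \<Rightarrow> complex"
  shows "(\<Sum>p<3+2*k. G p) = (\<Sum>p<3. G p) + (\<Sum>j<k. G (3+2*j) + G (4+2*j))"
proof (induction k)
  case 0 thus ?case by simp
next
  case (Suc k)
  have e: "3 + 2 * Suc k = Suc (Suc (3 + 2 * k))" by simp
  have e2: "Suc (3 + 2 * k) = 4 + 2 * k" by simp
  show ?case unfolding e sum.lessThan_Suc Suc.IH by (simp add: ac_simps)
qed

lemma blk_diag_sum:
  fixes \<phi> \<psi> :: "nat \<Rightarrow> complex"
  shows "(\<Sum>p<3+2*k. if p < 3 then \<phi> p else \<psi> (p - bs p)) = (\<Sum>p<3. \<phi> p) + of_nat k * (\<psi> 0 + \<psi> 1)"
proof -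
  have "\<And>j. bs (3 + 2*j) = 3 + 2*j" "\<And>j. bs (4 + 2*j) = 3 + 2*j" by (simp_all add: bs_def)
  thus ?thesis unfolding outer_sum by simp
qed

lemma blk_trace_nat:
  shows "(\<Sum>p<3+2*k. blk M R p p) = (\<Sum>p<3. M p p) + of_nat k * (R 0 0 + R 1 1)"
proof -
  have "\<And>p. blk M R p p = (if p < 3 then M p p else (\<lambda>j. R j j) (p - bs p))" by (simp add: blk_def)
  thus ?thesis using blk_diag_sum[of "\<lambda>p. M p p" "\<lambda>j. R j j" k] by simp
qed

lemma blk_tsum_nat:
  fixes d :: nat
  assumes dk: "d = 3 + 2*k"
  shows "(\<Sum>p<d. \<Sum>r<d. blk M R p r * cnj (blk M R r p)) =
     (\<Sum>p<3. \<Sum>r<3. M p r * cnj (M r p)) + of_nat k * (\<Sum>p<2. \<Sum>r<2. R p r * cnj (R r p))"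
proof -
  have d: "odd d" "3 \<le> d" using dk by auto
  have inner: "(\<Sum>r<d. blk M R p r * cnj (blk M R r p)) =
     (if p < 3 then (\<Sum>r<3. M p r * cnj (M r p)) else
        (\<lambda>j. \<Sum>r<2. R j r * cnj (R r j)) (p - bs p))" if p: "p < d" for p
  proof -
    have "(\<Sum>r<d. blk M R p r * cnj (blk M R r p)) =
      (if p < 3 then (\<Sum>r<3. blk M R p r * cnj (blk M R r p))
       else (\<Sum>r<2. blk M R p (bs p + r) * cnj (blk M R (bs p + r) p)))"
      by (rule blocksum[OF d p]) (simp add: blk_def)
    also have "\<dots> = (if p < 3 then (\<Sum>r<3. M p r * cnj (M r p)) else
        (\<lambda>j. \<Sum>r<2. R j r * cnj (R r j)) (p - bs p))"
    proof (cases "p < 3")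
      case True thus ?thesis by (auto intro!: sum.cong simp: blk_def bs_lt3)
    next
      case False
      have b: "3 \<le> bs p" using bs_ge3[of p] False by auto
      have "\<And>r. r < 2 \<Longrightarrow> bs (bs p + r) = bs p" using bs_add False by simp
      thus ?thesis using False b by (auto intro!: sum.cong simp: blk_def)
    qed
    finally show ?thesis .
  qed
  have "(\<Sum>p<d. \<Sum>r<d. blk M R p r * cnj (blk M R r p)) =
      (\<Sum>p<3+2*k. if p < 3 then (\<Sum>r<3. M p r * cnj (M r p)) else
        (\<lambda>j. \<Sum>r<2. R j r * cnj (R r j)) (p - bs p))"
    using inner dk by (intro sum.cong) auto
  also have "\<dots> = (\<Sum>p<3. \<Sum>r<3. M p r * cnj (M r p)) + of_nat k * (\<Sum>p<2. \<Sum>r<2. R p r * cnj (R r p))"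
    by (subst blk_diag_sum) (simp add: numeral_2_eq_2)
  finally show ?thesis .
qed

lemma blk_unitary:
  fixes M R :: "nat \<Rightarrow> nat \<Rightarrow> complex"
  assumes odd: "odd CARD('n)" and d3: "3 \<le> CARD('n)"
    and MU: "\<And>p q. p < 3 \<Longrightarrow> q < 3 \<Longrightarrow> (\<Sum>r<3. M p r * cnj (M q r)) = (if p = q then 1 else 0)"
    and MUc: "\<And>p q. p < 3 \<Longrightarrow> q < 3 \<Longrightarrow> (\<Sum>r<3. M r p * cnj (M r q)) = (if p = q then 1 else 0)"
    and RU: "\<And>p q. p < 2 \<Longrightarrow> q < 2 \<Longrightarrow> (\<Sum>r<2. R p r * cnj (R q r)) = (if p = q then 1 else 0)"
    and RUc: "\<And>p q. p < 2 \<Longrightarrow> q < 2 \<Longrightarrow> (\<Sum>r<2. R r p * cnj (R r q)) = (if p = q then 1 else 0)"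
  shows "\<exists>U::complex^'n^'n. unitary U \<and>
     mtrace U = (\<Sum>p<3. M p p) + of_nat ((CARD('n) - 3) div 2) * (R 0 0 + R 1 1) \<and>
     mtrace (U ** mconj U) = (\<Sum>p<3. \<Sum>r<3. M p r * cnj (M r p))
        + of_nat ((CARD('n) - 3) div 2) * (\<Sum>p<2. \<Sum>r<2. R p r * cnj (R r p))"
proof -
  define d where "d = CARD('n)"
  define k where "k = (d - 3) div 2"
  have dk: "d = 3 + 2 * k" using odd d3 unfolding d_def k_def by presburger
  have dd: "odd d" "3 \<le> d" using odd d3 by (auto simp: d_def)
  obtain f where f: "bij_betw f (UNIV::'n set) {..<d}"
    using ex_bij_betw_finite_nat[of "UNIV::'n set"] by (auto simp: d_def atLeast0LessThan)
  have fr: "f i < d" for i using f by (auto simp: bij_betw_def)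
  have finj: "f i = f j \<longleftrightarrow> i = j" for i j using f by (auto simp: bij_betw_def inj_on_def)
  have reidx: "(\<Sum>x\<in>UNIV. g (f x)) = (\<Sum>r<d. g r)" for g :: "nat \<Rightarrow> complex"
    by (rule sum.reindex_bij_betw[OF f])
  define U :: "complex^'n^'n" where "U = (\<chi> i j. blk M R (f i) (f j))"
  have "U ** madj U = mat 1"
  proof (clarsimp simp: vec_eq_iff)
    fix i j
    have "(U ** madj U)$i$j = (\<Sum>r<d. blk M R (f i) r * cnj (blk M R (f j) r))"
      using reidx[of "\<lambda>r. blk M R (f i) r * cnj (blk M R (f j) r)"]
      by (simp add: U_def matrix_matrix_mult_def madj_def)
    also have "\<dots> = (if f i = f j then 1 else 0)" by (rule blk_row[OF dd fr fr MU RU])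
    finally show "(U ** madj U)$i$j = mat 1 $ i $ j" by (simp add: finj mat_def)
  qed
  moreover have "madj U ** U = mat 1"
  proof (clarsimp simp: vec_eq_iff)
    fix i j
    have "(madj U ** U)$i$j = (\<Sum>r<d. cnj (blk M R r (f i)) * blk M R r (f j))"
      using reidx[of "\<lambda>r. cnj (blk M R r (f i)) * blk M R r (f j)"]
      by (simp add: U_def matrix_matrix_mult_def madj_def)
    also have "\<dots> = (\<Sum>r<d. blk (\<lambda>p q. M q p) (\<lambda>p q. R q p) (f j) r *
          cnj (blk (\<lambda>p q. M q p) (\<lambda>p q. R q p) (f i) r))"
      by (simp add: blk_trans[of M R _ "f i"] blk_trans[of M R _ "f j"] mult.commute)
    also have "\<dots> = (if f j = f i then 1 else 0)" by (rule blk_row[OF dd fr fr MUc RUc])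
    finally show "(madj U ** U)$i$j = mat 1 $ i $ j" by (auto simp: finj mat_def)
  qed
  ultimately have "unitary U" by (simp add: unitary_def)
  moreover have "mtrace U = (\<Sum>p<3. M p p) + of_nat k * (R 0 0 + R 1 1)"
  proof -
    have "mtrace U = (\<Sum>r<d. blk M R r r)"
      using reidx[of "\<lambda>r. blk M R r r"] by (simp add: U_def mtrace_def)
    thus ?thesis using blk_trace_nat[where k=k and M=M and R=R] dk by simp
  qed
  moreover have "mtrace (U ** mconj U) = (\<Sum>p<3. \<Sum>r<3. M p r * cnj (M r p))
        + of_nat k * (\<Sum>p<2. \<Sum>r<2. R p r * cnj (R r p))"
  proof -
    have "mtrace (U ** mconj U) = (\<Sum>i\<in>UNIV. \<Sum>j\<in>UNIV. blk M R (f i) (f j) * cnj (blk M R (f j) (f i)))"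
      by (simp add: U_def mtrace_def matrix_matrix_mult_def mconj_def)
    also have "\<dots> = (\<Sum>i\<in>UNIV. \<Sum>r<d. blk M R (f i) r * cnj (blk M R r (f i)))"
      by (intro sum.cong refl) (rule reidx)
    also have "\<dots> = (\<Sum>p<d. \<Sum>r<d. blk M R p r * cnj (blk M R r p))"
      by (rule reidx)
    also have "\<dots> = (\<Sum>p<3. \<Sum>r<3. M p r * cnj (M r p))
        + of_nat k * (\<Sum>p<2. \<Sum>r<2. R p r * cnj (R r p))" by (rule blk_tsum_nat[OF dk])
    finally show ?thesis .
  qed
  ultimately show ?thesis unfolding k_def d_def by blast
qed



lemma sum3: "(\<Sum>r<3. g r) = g 0 + g 1 + g (2::nat)"
  by (simp add: numeral_3_eq_3 numeral_2_eq_2)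
lemma sum2: "(\<Sum>r<2. g r) = g 0 + g (1::nat)"
  by (simp add: numeral_2_eq_2)
lemma lt3: "(p::nat) < 3 \<Longrightarrow> p = 0 \<or> p = 1 \<or> p = 2" by auto
lemma lt2: "(p::nat) < 2 \<Longrightarrow> p = 0 \<or> p = 1" by auto

lemma kreal: "odd CARD('n) \<Longrightarrow> 3 \<le> CARD('n) \<Longrightarrow>
   (of_nat ((CARD('n) - 3) div 2) :: complex) = complex_of_real ((real CARD('n) - 3) / 2)"
proof -
  assume "odd CARD('n)" "3 \<le> CARD('n)"
  hence "2 * ((CARD('n) - 3) div 2) = CARD('n) - 3" by presburger
  hence "real (2 * ((CARD('n) - 3) div 2)) = real CARD('n) - 3" using \<open>3 \<le> CARD('n)\<close> by simp
  hence "real ((CARD('n) - 3) div 2) = (real CARD('n) - 3) / 2" by simp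
  thus ?thesis by (metis of_real_of_nat_eq)
qed

lemma upoint_eq:
  assumes "mtrace U = complex_of_real a" "mtrace (U ** mconj U) = complex_of_real b"
  shows "upoint (U::complex^'n^'n) = (b / real CARD('n), a\<^sup>2 / real CARD('n))"
  using assms by (simp add: upoint_def)

definition Lm :: "complex list list \<Rightarrow> nat \<Rightarrow> nat \<Rightarrow> complex" where
  "Lm L p q = L ! p ! q"

lemma curve_point:
  fixes c s :: real
  assumes odd: "odd CARD('n)" and d3: "3 \<le> CARD('n)" and cs: "c\<^sup>2 + s\<^sup>2 = 1"
  shows "\<exists>U::complex^'n^'n. unitary U \<and>
     mtrace U = complex_of_real (1 + (real CARD('n) - 1) * c) \<and>
     mtrace (U ** mconj U) = complex_of_real (1 + (real CARD('n) - 1) * (2 * c\<^sup>2 - 1))"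
proof -
  define M where "M = Lm [[1,0,0],[0,complex_of_real c,complex_of_real s],[0,- complex_of_real s,complex_of_real c]]"
  define R where "R = Lm [[complex_of_real c,complex_of_real s],[- complex_of_real s,complex_of_real c]]"
  have cs': "complex_of_real c * complex_of_real c + complex_of_real s * complex_of_real s = 1"
    using cs by (metis of_real_1 of_real_add of_real_mult power2_eq_square)
  have MU: "(\<Sum>r<3. M p r * cnj (M q r)) = (if p = q then 1 else 0)"
     and MUc: "(\<Sum>r<3. M r p * cnj (M r q)) = (if p = q then 1 else 0)"
    if "p < 3" "q < 3" for p q
    using lt3[OF that(1)] lt3[OF that(2)] cs'
    by (auto simp: M_def Lm_def sum3 algebra_simps)
  have RU: "(\<Sum>r<2. R p r * cnj (R q r)) = (if p = q then 1 else 0)"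
     and RUc: "(\<Sum>r<2. R r p * cnj (R r q)) = (if p = q then 1 else 0)"
    if "p < 2" "q < 2" for p q
    using lt2[OF that(1)] lt2[OF that(2)] cs'
    by (auto simp: R_def Lm_def sum2 algebra_simps)
  obtain U :: "complex^'n^'n" where U: "unitary U"
    "mtrace U = (\<Sum>p<3. M p p) + of_nat ((CARD('n) - 3) div 2) * (R 0 0 + R 1 1)"
    "mtrace (U ** mconj U) = (\<Sum>p<3. \<Sum>r<3. M p r * cnj (M r p))
        + of_nat ((CARD('n) - 3) div 2) * (\<Sum>p<2. \<Sum>r<2. R p r * cnj (R r p))"
    using blk_unitary[OF odd d3 MU MUc RU RUc] by blast
  have "mtrace U = complex_of_real (1 + (real CARD('n) - 1) * c)"
    unfolding U(2) kreal[OF odd d3] by (simp add: M_def R_def Lm_def sum3 sum2 field_simps)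
  moreover have "mtrace (U ** mconj U) = complex_of_real (1 + (real CARD('n) - 1) * (2 * c\<^sup>2 - 1))"
  proof -
    have s2: "(complex_of_real c)\<^sup>2 = 1 - (complex_of_real s)\<^sup>2" using cs'
      by (simp add: power2_eq_square algebra_simps)
    show ?thesis
      unfolding U(3) kreal[OF odd d3]
      by (simp add: M_def R_def Lm_def sum3 sum2 field_simps power2_eq_square[symmetric] s2)
  qed
  ultimately show ?thesis using U(1) by blast
qed

lemma corner_right:
  assumes odd: "odd CARD('n)" and d3: "3 \<le> CARD('n)"
  shows "\<exists>U::complex^'n^'n. unitary U \<and> mtrace U = 0 \<and>
     mtrace (U ** mconj U) = complex_of_real (real CARD('n))"
proof -
  define w where "w = Complex (-1/2) (sqrt 3 / 2)"
  have w1: "w * cnj w = 1" "cnj w * w = 1"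
    by (simp_all add: w_def complex_eq_iff power2_eq_square)
  define M where "M = Lm [[1,0,0],[0,w,0],[0,0,cnj w]]"
  define R where "R = Lm [[1,0],[0,-1::complex]]"
  have MU: "(\<Sum>r<3. M p r * cnj (M q r)) = (if p = q then 1 else 0)"
     and MUc: "(\<Sum>r<3. M r p * cnj (M r q)) = (if p = q then 1 else 0)"
    if "p < 3" "q < 3" for p q
    using lt3[OF that(1)] lt3[OF that(2)] w1
    by (auto simp: M_def Lm_def sum3)
  have RU: "(\<Sum>r<2. R p r * cnj (R q r)) = (if p = q then 1 else 0)"
     and RUc: "(\<Sum>r<2. R r p * cnj (R r q)) = (if p = q then 1 else 0)"
    if "p < 2" "q < 2" for p q
    using lt2[OF that(1)] lt2[OF that(2)]
    by (auto simp: R_def Lm_def sum2)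
  obtain U :: "complex^'n^'n" where U: "unitary U"
    "mtrace U = (\<Sum>p<3. M p p) + of_nat ((CARD('n) - 3) div 2) * (R 0 0 + R 1 1)"
    "mtrace (U ** mconj U) = (\<Sum>p<3. \<Sum>r<3. M p r * cnj (M r p))
        + of_nat ((CARD('n) - 3) div 2) * (\<Sum>p<2. \<Sum>r<2. R p r * cnj (R r p))"
    using blk_unitary[OF odd d3 MU MUc RU RUc] by blast
  have "mtrace U = 0"
    unfolding U(2) by (simp add: M_def R_def Lm_def sum3 sum2 w_def complex_eq_iff)
  moreover have "mtrace (U ** mconj U) = complex_of_real (real CARD('n))"
    unfolding U(3) kreal[OF odd d3] using w1
    by (simp add: M_def R_def Lm_def sum3 sum2 field_simps)
  ultimately show ?thesis using U(1) by blast
qed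

lemma corner_left:
  assumes odd: "odd CARD('n)" and d3: "3 \<le> CARD('n)"
  shows "\<exists>U::complex^'n^'n. unitary U \<and> mtrace U = 0 \<and>
     mtrace (U ** mconj U) = complex_of_real (2 - real CARD('n))"
proof -
  define h where "h = 1 / sqrt 2"
  have h2: "h * h = 1/2" by (simp add: h_def)
  define M where "M = Lm [[Complex (1/2) 0, Complex 0 (-1/2), Complex 0 (-h)],
                          [Complex 0 (-1/2), Complex (-1/2) 0, Complex h 0],
                          [Complex 0 h, Complex (-h) 0, 0]]"
  define R where "R = Lm [[0,1],[-1,0::complex]]"
  have MU: "(\<Sum>r<3. M p r * cnj (M q r)) = (if p = q then 1 else 0)"
     and MUc: "(\<Sum>r<3. M r p * cnj (M r q)) = (if p = q then 1 else 0)"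
    if "p < 3" "q < 3" for p q
    using lt3[OF that(1)] lt3[OF that(2)] h2
    by (auto simp: M_def Lm_def sum3 complex_eq_iff)
  have RU: "(\<Sum>r<2. R p r * cnj (R q r)) = (if p = q then 1 else 0)"
     and RUc: "(\<Sum>r<2. R r p * cnj (R r q)) = (if p = q then 1 else 0)"
    if "p < 2" "q < 2" for p q
    using lt2[OF that(1)] lt2[OF that(2)]
    by (auto simp: R_def Lm_def sum2)
  obtain U :: "complex^'n^'n" where U: "unitary U"
    "mtrace U = (\<Sum>p<3. M p p) + of_nat ((CARD('n) - 3) div 2) * (R 0 0 + R 1 1)"
    "mtrace (U ** mconj U) = (\<Sum>p<3. \<Sum>r<3. M p r * cnj (M r p))
        + of_nat ((CARD('n) - 3) div 2) * (\<Sum>p<2. \<Sum>r<2. R p r * cnj (R r p))"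
    using blk_unitary[OF odd d3 MU MUc RU RUc] by blast
  have "mtrace U = 0"
    unfolding U(2) by (simp add: M_def R_def Lm_def sum3 sum2 complex_eq_iff)
  moreover have "mtrace (U ** mconj U) = complex_of_real (2 - real CARD('n))"
    unfolding U(3) kreal[OF odd d3] using h2
    by (simp add: M_def R_def Lm_def sum3 sum2 complex_eq_iff field_simps)
  ultimately show ?thesis using U(1) by blast
qed



definition sf :: "real \<Rightarrow> real \<Rightarrow> real" where
  "sf d x = (1/2) * (1 - 1/d) * (1 - 2/d + x)"

definition gf :: "real \<Rightarrow> real \<Rightarrow> real" where
  "gf d x = d * (mfun d x)\<^sup>2"

lemma mfun_sf: "mfun d x = sqrt (sf d x) + 1/d"
  by (simp add: mfun_def sf_def)

lemma gf_expand: "d > 0 \<Longrightarrow> sf d x \<ge> 0 \<Longrightarrow> gf d x = d * sf d x + 2 * sqrt (sf d x) + 1/d"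
  by (simp add: gf_def mfun_sf power2_eq_square field_simps)

lemma aff_gen: "k * (c + ((1-u)*a + u*b)) = (1-u)*(k*(c+a)) + u*(k*(c+b))" for k c u a b :: real
  by (simp add: algebra_simps)

lemma sf_affine: "sf d ((1-u)*a + u*b) = (1-u) * sf d a + u * sf d b"
  unfolding sf_def by (rule aff_gen)

lemma conv_lo: "lo \<le> a \<Longrightarrow> lo \<le> b \<Longrightarrow> 0 \<le> u \<Longrightarrow> u \<le> 1 \<Longrightarrow> lo \<le> (1-u)*a + u*b"
  for lo a b u :: real
proof -
  assume h: "lo \<le> a" "lo \<le> b" "0 \<le> u" "u \<le> 1"
  have "(1-u)*(a-lo) \<ge> 0" "u*(b-lo) \<ge> 0" using h by simp_all
  moreover have "(1-u)*a + u*b - lo = (1-u)*(a-lo) + u*(b-lo)" by (simp add: algebra_simps)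
  ultimately show ?thesis by linarith
qed

lemma conv_hi: "a \<le> hi \<Longrightarrow> b \<le> hi \<Longrightarrow> 0 \<le> u \<Longrightarrow> u \<le> 1 \<Longrightarrow> (1-u)*a + u*b \<le> hi"
  for hi a b u :: real
proof -
  assume h: "a \<le> hi" "b \<le> hi" "0 \<le> u" "u \<le> 1"
  have "(1-u)*(hi-a) \<ge> 0" "u*(hi-b) \<ge> 0" using h by simp_all
  moreover have "hi - ((1-u)*a + u*b) = (1-u)*(hi-a) + u*(hi-b)" by (simp add: algebra_simps)
  ultimately show ?thesis by linarith
qed

lemma sf_nonneg: "d > 1 \<Longrightarrow> -1 + 2/d \<le> x \<Longrightarrow> sf d x \<ge> 0"
proof -
  assume d: "d > 1" and x: "-1 + 2/d \<le> x"
  have "1/d < 1" using d by simp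
  hence "(1/2) * (1 - 1/d) \<ge> 0" by simp
  moreover have "1 - 2/d + x \<ge> 0" using x by simp
  ultimately show ?thesis unfolding sf_def by (rule mult_nonneg_nonneg)
qed

lemma sf_inj: "d > 1 \<Longrightarrow> sf d a = sf d b \<Longrightarrow> a = b"
proof -
  assume d: "d > 1" and e: "sf d a = sf d b"
  have "1/d < 1" using d by simp
  hence "(1/2) * (1 - 1/d) \<noteq> 0" using d by simp
  thus "a = b" using e d unfolding sf_def by simp
qed

lemma sq_ident: "((1-u)*p + u*q)\<^sup>2 = (1-u)*p\<^sup>2 + u*q\<^sup>2 - u*(1-u)*(p - q)\<^sup>2"
  for u p q :: real
  by (simp add: power2_eq_square algebra_simps)

lemma sqrt_concave:
  fixes s t u :: real
  assumes "s \<ge> 0" "t \<ge> 0" "0 \<le> u" "u \<le> 1"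
  shows "(1-u) * sqrt s + u * sqrt t \<le> sqrt ((1-u) * s + u*t)"
proof (rule real_le_rsqrt)
  have "((1-u) * sqrt s + u * sqrt t)\<^sup>2 = (1-u) * s + u*t - u*(1-u)*(sqrt s - sqrt t)\<^sup>2"
    using sq_ident[of u "sqrt s" "sqrt t"] assms by simp
  moreover have "u*(1-u)*(sqrt s - sqrt t)\<^sup>2 \<ge> 0" using assms by simp
  ultimately show "((1-u) * sqrt s + u * sqrt t)\<^sup>2 \<le> (1-u) * s + u*t" by linarith
qed

lemma sqrt_strict:
  fixes s t u :: real
  assumes "s \<ge> 0" "t \<ge> 0" "0 < u" "u < 1"
    and eq: "sqrt ((1-u) * s + u*t) \<le> (1-u) * sqrt s + u * sqrt t"
  shows "s = t"
proof -
  have nn: "(1-u) * s + u*t \<ge> 0" using assms by simp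
  have "(1-u) * sqrt s + u * sqrt t \<le> sqrt ((1-u) * s + u*t)"
    using sqrt_concave assms by simp
  hence e: "sqrt ((1-u) * s + u*t) = (1-u) * sqrt s + u * sqrt t" using eq by linarith
  have "((1-u) * sqrt s + u * sqrt t)\<^sup>2 = (1-u) * s + u*t - u*(1-u)*(sqrt s - sqrt t)\<^sup>2"
    using sq_ident[of u "sqrt s" "sqrt t"] assms by simp
  moreover have "((1-u) * sqrt s + u * sqrt t)\<^sup>2 = (1-u) * s + u*t"
    using e[symmetric] nn by simp
  ultimately have "u*(1-u)*(sqrt s - sqrt t)\<^sup>2 = 0" by linarith
  hence "sqrt s = sqrt t" using assms by simp
  thus ?thesis by simp
qed

lemma ring_id: "dd*((1-u)*A+u*B) + 2*W + e - ((1-u)*(dd*A + 2*SA + e) + u*(dd*B + 2*SB + e))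
   = 2*(W - ((1-u)*SA + u*SB))" for dd u A B W e SA SB :: real
  by (simp add: algebra_simps)

lemma lin1: "X - Y = 2*(W - V) \<Longrightarrow> V \<le> W \<Longrightarrow> Y \<le> (X::real)" by argo
lemma lin2: "X - Y = 2*(W - V) \<Longrightarrow> X \<le> Y \<Longrightarrow> W \<le> (V::real)" by argo

lemma gf_diff:
  assumes d: "d > 1" and a: "-1 + 2/d \<le> a" and b: "-1 + 2/d \<le> b" and u: "0 \<le> u" "u \<le> 1"
  shows "gf d ((1-u)*a + u*b) - ((1-u) * gf d a + u * gf d b) =
     2 * (sqrt (sf d ((1-u)*a + u*b)) - ((1-u) * sqrt (sf d a) + u * sqrt (sf d b)))"
proof -
  define z where "z = (1-u)*a + u*b"
  have sa: "sf d a \<ge> 0" and sb: "sf d b \<ge> 0" using sf_nonneg d a b by auto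
  have sz: "sf d z \<ge> 0" unfolding z_def using d a b u by (intro sf_nonneg conv_lo) auto
  have ez: "sf d z = (1-u) * sf d a + u * sf d b" unfolding z_def by (rule sf_affine)
  have "gf d z - ((1-u) * gf d a + u * gf d b) =
     d * sf d z + 2 * sqrt (sf d z) + 1/d - ((1-u) * (d * sf d a + 2 * sqrt (sf d a) + 1/d)
       + u * (d * sf d b + 2 * sqrt (sf d b) + 1/d))"
    using d sa sb sz by (simp add: gf_expand)
  also have "\<dots> = 2 * (sqrt (sf d z) - ((1-u) * sqrt (sf d a) + u * sqrt (sf d b)))"
    unfolding ez by (rule ring_id)
  finally show ?thesis unfolding z_def .
qed

lemma gf_concave:
  assumes d: "d > 1" and a: "-1 + 2/d \<le> a" and b: "-1 + 2/d \<le> b" and u: "0 \<le> u" "u \<le> 1"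
  shows "(1-u) * gf d a + u * gf d b \<le> gf d ((1-u)*a + u*b)"
proof -
  have sa: "sf d a \<ge> 0" and sb: "sf d b \<ge> 0" using sf_nonneg d a b by auto
  have sz: "sf d ((1-u)*a + u*b) \<ge> 0" using sa sb u by (simp add: sf_affine)
  have c1: "(1-u) * sqrt (sf d a) + u * sqrt (sf d b) \<le> sqrt (sf d ((1-u)*a + u*b))"
    unfolding sf_affine using sqrt_concave sa sb u by simp
  have c2: "gf d ((1-u)*a + u*b) - ((1-u) * gf d a + u * gf d b) =
     2 * (sqrt (sf d ((1-u)*a + u*b)) - ((1-u) * sqrt (sf d a) + u * sqrt (sf d b)))"
    by (rule gf_diff[OF d a b]) (use u in auto)
  show ?thesis by (rule lin1[OF c2 c1])
qed

lemma gf_strict: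
  assumes d: "d > 1" and a: "-1 + 2/d \<le> a" and b: "-1 + 2/d \<le> b" and u: "0 < u" "u < 1"
    and le: "gf d ((1-u)*a + u*b) \<le> (1-u) * gf d a + u * gf d b"
  shows "a = b"
proof -
  have sa: "sf d a \<ge> 0" and sb: "sf d b \<ge> 0" using sf_nonneg d a b by auto
  have sz: "sf d ((1-u)*a + u*b) \<ge> 0" using sa sb u by (simp add: sf_affine)
  have "gf d ((1-u)*a + u*b) - ((1-u) * gf d a + u * gf d b) =
     2 * (sqrt (sf d ((1-u)*a + u*b)) - ((1-u) * sqrt (sf d a) + u * sqrt (sf d b)))"
    by (rule gf_diff[OF d a b]) (use u in auto)
  hence "sqrt (sf d ((1-u)*a + u*b)) \<le> (1-u) * sqrt (sf d a) + u * sqrt (sf d b)"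
    using le by (rule lin2)
  hence "sf d a = sf d b" unfolding sf_affine using sqrt_strict sa sb u by blast
  thus ?thesis using sf_inj d by blast
qed

definition Rg :: "real \<Rightarrow> (real \<times> real) set" where
  "Rg d = {p. -1 + 2/d \<le> fst p \<and> fst p \<le> 1 \<and> 0 \<le> snd p \<and> snd p \<le> gf d (fst p)}"

lemma Rg_convex: "d > 1 \<Longrightarrow> convex (Rg d)"
  unfolding convex_alt
proof (intro ballI allI impI)
  fix p q :: "real \<times> real" and u :: real
  assume d: "d > 1" and p: "p \<in> Rg d" and q: "q \<in> Rg d" and u: "0 \<le> u \<and> u \<le> 1"
  have u0: "0 \<le> u" and u1: "u \<le> 1" using u by auto
  have c: "(1-u) * gf d (fst p) + u * gf d (fst q) \<le> gf d ((1-u) * fst p + u * fst q)"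
    using gf_concave[OF d _ _ u0 u1] p q by (simp add: Rg_def)
  have "(1-u) * snd p + u * snd q \<le> (1-u) * gf d (fst p) + u * gf d (fst q)"
    using p q u1 u0 by (intro add_mono mult_left_mono) (auto simp: Rg_def)
  moreover have "-1 + 2/d \<le> (1-u) * fst p + u * fst q"
    using p q u0 u1 by (intro conv_lo) (auto simp: Rg_def)
  moreover have "(1-u) * fst p + u * fst q \<le> 1"
    using p q u0 u1 by (intro conv_hi) (auto simp: Rg_def)
  moreover have "0 \<le> (1-u) * snd p + u * snd q" using p q u0 u1 by (auto simp: Rg_def)
  moreover have ef: "fst ((1 - u) *\<^sub>R p + u *\<^sub>R q) = (1-u) * fst p + u * fst q" by simp
  moreover have es: "snd ((1 - u) *\<^sub>R p + u *\<^sub>R q) = (1-u) * snd p + u * snd q" by simp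
  ultimately show "(1 - u) *\<^sub>R p + u *\<^sub>R q \<in> Rg d" using c unfolding Rg_def mem_Collect_eq ef es
    by (intro conjI) linarith+
qed



lemma ext_lo:
  fixes lo a b u :: real
  assumes "lo \<le> a" "lo \<le> b" "0 < u" "u < 1" "(1-u)*a + u*b = lo"
  shows "a = lo \<and> b = lo"
proof -
  have e: "(1-u)*(a-lo) + u*(b-lo) = 0" using assms(5) by (simp add: algebra_simps)
  have n1: "(1-u)*(a-lo) \<ge> 0" and n2: "u*(b-lo) \<ge> 0" using assms by simp_all
  have "(1-u)*(a-lo) = 0" "u*(b-lo) = 0" using e n1 n2 by linarith+
  thus ?thesis using assms by simp
qed

lemma ext_hi:
  fixes hi a b u :: real
  assumes "a \<le> hi" "b \<le> hi" "0 < u" "u < 1" "(1-u)*a + u*b = hi"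
  shows "a = hi \<and> b = hi"
proof -
  have e: "(1-u)*(hi-a) + u*(hi-b) = 0" using assms(5) by (simp add: algebra_simps)
  have n1: "(1-u)*(hi-a) \<ge> 0" and n2: "u*(hi-b) \<ge> 0" using assms by simp_all
  have "(1-u)*(hi-a) = 0" "u*(hi-b) = 0" using e n1 n2 by linarith+
  thus ?thesis using assms by simp
qed

lemma gf_at:
  fixes d t :: real
  assumes d: "d > 1" and t: "2 - d \<le> t"
  shows "gf d (t/d) = (1 + sqrt ((d-1)*(d-2+t)/2))\<^sup>2 / d"
proof -
  define Q where "Q = (d-1)*(d-2+t)/2"
  have "sf d (t/d) = Q / d\<^sup>2" using d by (simp add: sf_def Q_def field_simps power2_eq_square)
  hence "sqrt (sf d (t/d)) = sqrt Q / d" using d by (simp add: real_sqrt_divide)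
  hence "mfun d (t/d) = (sqrt Q + 1) / d" by (simp add: mfun_sf add_divide_distrib)
  thus ?thesis using d by (simp add: gf_def Q_def power_divide power2_eq_square add.commute)
qed

lemma P_sub_Rg:
  assumes odd: "odd CARD('n)" and d3: "3 \<le> CARD('n)" and U: "unitary (U::complex^'n^'n)"
  shows "upoint U \<in> Rg (real CARD('n))"
proof -
  define d where "d = real CARD('n)"
  define t where "t = Re (mtrace (U ** mconj U))"
  define T where "T = cmod (mtrace U)"
  have d1: "d > 1" using d3 by (simp add: d_def)
  have i1: "t \<le> d" and i2: "2 - d \<le> t" and i3: "T \<le> 1 + sqrt ((d - 1) * (d - 2 + t) / 2)"
    using main_ineq[OF U odd] by (simp_all add: d_def t_def T_def)
  have up: "upoint U = (t/d, T\<^sup>2/d)" by (simp add: upoint_def d_def t_def T_def)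
  have "-1 + 2/d \<le> t/d"
  proof -
    have "(2 - d)/d \<le> t/d" using i2 d1 by (simp add: divide_right_mono)
    moreover have "(2-d)/d = -1 + 2/d" using d1 by (simp add: field_simps)
    ultimately show ?thesis by simp
  qed
  moreover have "t/d \<le> 1" using i1 d1 by simp
  moreover have "0 \<le> T\<^sup>2/d" using d1 by simp
  moreover have "T\<^sup>2/d \<le> gf d (t/d)"
  proof -
    have "T\<^sup>2 \<le> (1 + sqrt ((d - 1) * (d - 2 + t) / 2))\<^sup>2"
      using i3 by (intro power_mono) (auto simp: T_def)
    thus ?thesis unfolding gf_at[OF d1 i2] using d1 by (simp add: divide_right_mono)
  qed
  ultimately show ?thesis unfolding up d_def[symmetric] by (simp add: Rg_def)
qed

lemma curve_in:
  assumes odd: "odd CARD('n)" and d3: "3 \<le> CARD('n)"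
    and x: "-1 + 2/real CARD('n) \<le> x" "x \<le> 1"
  shows "(x, gf (real CARD('n)) x) \<in> {upoint (U::complex^'n^'n) | U. unitary U}"
proof -
  define d where "d = real CARD('n)"
  have d1: "d > 1" using d3 by (simp add: d_def)
  define w where "w = sf d x"
  have w0: "w \<ge> 0" unfolding w_def using sf_nonneg d1 x by (simp add: d_def)
  define c where "c = d * sqrt w / (d - 1)"
  have dw: "d\<^sup>2 * w = (d-1)*(d-2+d*x)/2" using d1 by (simp add: w_def sf_def field_simps power2_eq_square)
  have c2: "(d-1) * c\<^sup>2 = (d-2+d*x)/2"
  proof -
    have "(d-1) * c\<^sup>2 = d\<^sup>2 * w / (d-1)" using d1 w0 by (simp add: c_def power_divide power_mult_distrib power2_eq_square)
    also have "\<dots> = (d-2+d*x)/2"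
    proof -
      have gen: "\<And>q Y::real. q \<noteq> 0 \<Longrightarrow> q*Y/2/q = Y/2" by simp
      show ?thesis unfolding dw by (rule gen) (use d1 in simp)
    qed
    finally show ?thesis .
  qed
  have "c\<^sup>2 \<le> 1"
  proof -
    have "d * x \<le> d * 1" using x d1 by (intro mult_left_mono) auto
    hence "(d-1) * c\<^sup>2 \<le> (d-1) * 1" unfolding c2 by simp
    thus ?thesis using d1 by simp
  qed
  define s where "s = sqrt (1 - c\<^sup>2)"
  have cs: "c\<^sup>2 + s\<^sup>2 = 1" using \<open>c\<^sup>2 \<le> 1\<close> by (simp add: s_def)
  obtain U :: "complex^'n^'n" where U: "unitary U"
    "mtrace U = complex_of_real (1 + (d - 1) * c)"
    "mtrace (U ** mconj U) = complex_of_real (1 + (d - 1) * (2 * c\<^sup>2 - 1))"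
    using curve_point[OF odd d3 cs] by (auto simp: d_def)
  have "upoint U = ((1 + (d - 1) * (2 * c\<^sup>2 - 1)) / d, (1 + (d - 1) * c)\<^sup>2 / d)"
    using upoint_eq[OF U(2,3)] by (simp add: d_def)
  moreover have "(1 + (d - 1) * (2 * c\<^sup>2 - 1)) / d = x"
  proof -
    have "1 + (d - 1) * (2 * c\<^sup>2 - 1) = 1 + 2 * ((d-1) * c\<^sup>2) - (d - 1)" by (simp add: algebra_simps)
    also have "\<dots> = d * x" unfolding c2 by (simp add: field_simps)
    finally show ?thesis using d1 by simp
  qed
  moreover have "(1 + (d - 1) * c)\<^sup>2 / d = gf d x"
  proof -
    have "(d - 1) * c = d * sqrt w" using d1 by (simp add: c_def)
    hence "(1 + (d - 1) * c)\<^sup>2 / d = (1 + d * sqrt w)\<^sup>2 / d" by simp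
    also have "\<dots> = gf d x" using d1
      by (simp add: gf_def mfun_sf w_def power2_eq_square field_simps)
    finally show ?thesis .
  qed
  ultimately have "upoint U = (x, gf d x)" by simp
  thus ?thesis using U(1) unfolding d_def by (metis (mono_tags, lifting) mem_Collect_eq)
qed

lemma corner_pts:
  assumes odd: "odd CARD('n)" and d3: "3 \<le> CARD('n)"
  shows "(-1 + 2/real CARD('n), 0) \<in> {upoint (U::complex^'n^'n) | U. unitary U}"
    and "(1, 0) \<in> {upoint (U::complex^'n^'n) | U. unitary U}"
proof -
  have d1: "real CARD('n) > 1" using d3 by simp
  obtain U :: "complex^'n^'n" where U: "unitary U" "mtrace U = 0"
     "mtrace (U ** mconj U) = complex_of_real (2 - real CARD('n))"
    using corner_left[OF odd d3] by blast
  have "upoint U = ((2 - real CARD('n)) / real CARD('n), 0\<^sup>2 / real CARD('n))"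
    by (rule upoint_eq) (use U in simp_all)
  moreover have "(2 - real CARD('n)) / real CARD('n) = -1 + 2/real CARD('n)"
    using d1 by (simp add: field_simps)
  ultimately show "(-1 + 2/real CARD('n), 0) \<in> {upoint (U::complex^'n^'n) | U. unitary U}"
    using U(1) by (auto intro!: exI[of _ U])
  obtain V :: "complex^'n^'n" where V: "unitary V" "mtrace V = 0"
     "mtrace (V ** mconj V) = complex_of_real (real CARD('n))"
    using corner_right[OF odd d3] by blast
  have "upoint V = (real CARD('n) / real CARD('n), 0\<^sup>2 / real CARD('n))"
    by (rule upoint_eq) (use V in simp_all)
  thus "(1, 0) \<in> {upoint (U::complex^'n^'n) | U. unitary U}"
    using V(1) d1 by (auto intro!: exI[of _ V])
qed



lemma oseg_comp:
  fixes p a b :: "real \<times> real"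
  assumes "p \<in> open_segment a b"
  obtains u where "0 < u" "u < 1" "a \<noteq> b" "fst p = (1-u) * fst a + u * fst b"
     "snd p = (1-u) * snd a + u * snd b"
  using assms by (auto simp: in_segment)

lemma oseg_intro:
  fixes p a b :: "real \<times> real"
  assumes "a \<noteq> b" "0 < u" "u < 1" "fst p = (1-u) * fst a + u * fst b"
     "snd p = (1-u) * snd a + u * snd b"
  shows "p \<in> open_segment a b"
  using assms unfolding in_segment by (intro conjI exI[of _ u]) (auto simp: prod_eq_iff)

lemma lerp:
  fixes q x x0 :: real
  assumes nz: "q \<noteq> 0" and qd: "q = 1 - x0"
  shows "(1 - (x - x0)/q) * x0 + (x - x0)/q = x"
proof -
  have "(1 - (x - x0)/q) * x0 + (x - x0)/q = ((q - (x - x0)) * x0 + (x - x0))/q"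
    using nz by (simp add: field_simps)
  also have "(q - (x - x0)) * x0 + (x - x0) = x * q" unfolding qd by (simp add: algebra_simps)
  finally show ?thesis using nz by simp
qed

theorem theorem5:
  fixes d :: real
  assumes "odd CARD('n)" and "CARD('n) \<ge> 3"
    and "d = real CARD('n)"
  shows "{p. p extreme_point_of
              convex hull {upoint (U :: complex^'n^'n) | U. unitary U}}
         = {(-1 + 2/d, 0), (1, 0)} \<union>
           {(x, d * (mfun d x)\<^sup>2) | x. -1 + 2/d \<le> x \<and> x \<le> 1}"
proof -
  note odd = assms(1) and d3 = assms(2)
  define P where "P = {upoint (U :: complex^'n^'n) | U. unitary U}"
  define K where "K = convex hull P"
  have dd: "d = real CARD('n)" by (rule assms(3))
  have d1: "d > 1" using d3 dd by simp
  define x0 where "x0 = -1 + 2/d"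
  have gfd: "\<And>x. d * (mfun d x)\<^sup>2 = gf d x" by (simp add: gf_def)
  have PR: "P \<subseteq> Rg d" using P_sub_Rg[OF odd d3] dd by (auto simp: P_def)
  have KR: "K \<subseteq> Rg d" unfolding K_def using PR Rg_convex[OF d1] by (rule hull_minimal)
  have PK: "P \<subseteq> K" unfolding K_def by (rule hull_subset)
  have cK: "convex K" unfolding K_def by simp
  have A1: "(x0, 0) \<in> P" and A2: "(1,0) \<in> P"
    using corner_pts[OF odd d3] dd by (simp_all add: P_def x0_def)
  have Cv: "\<And>x. x0 \<le> x \<Longrightarrow> x \<le> 1 \<Longrightarrow> (x, gf d x) \<in> P"
    using curve_in[OF odd d3] dd by (simp add: P_def x0_def)
  have x01: "x0 < 1"
  proof -
    have "0 < d" using d1 by simp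
    hence "2/d < 2" using d1 by (simp add: divide_less_eq)
    thus ?thesis by (simp add: x0_def)
  qed
  have nz: "1 - x0 \<noteq> 0" using x01 by simp
  have gfpos: "gf d x > 0" if "x0 \<le> x" for x
  proof -
    have "sf d x \<ge> 0" using sf_nonneg d1 that by (simp add: x0_def)
    hence "sqrt (sf d x) \<ge> 0" by simp
    moreover have "1/d > 0" using d1 by simp
    ultimately have "mfun d x > 0" unfolding mfun_sf by linarith
    thus ?thesis using d1 by (simp add: gf_def)
  qed
  have Rgm: "\<And>x y. (x, y) \<in> Rg d \<longleftrightarrow> x0 \<le> x \<and> x \<le> 1 \<and> 0 \<le> y \<and> y \<le> gf d x"
    by (simp add: Rg_def x0_def)
  have seg0: "(x, 0) \<in> K" if x: "x0 \<le> x" "x \<le> 1" for x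
  proof -
    define l where "l = (x - x0) / (1 - x0)"
    have l: "0 \<le> l" "l \<le> 1" using x x01 by (simp_all add: l_def divide_simps)
    have "(1 - l) *\<^sub>R (x0, 0) + l *\<^sub>R (1, 0) \<in> K"
      using convexD_alt[OF cK _ _ l] A1 A2 PK by blast
    moreover have "(1 - l) *\<^sub>R (x0, 0) + l *\<^sub>R (1::real, 0::real) = (x, 0)"
      using lerp[OF nz refl, of x] by (simp add: l_def)
    ultimately show ?thesis by simp
  qed
  have "{p. p extreme_point_of K} = {(x0, 0), (1, 0)} \<union> {(x, gf d x) | x. x0 \<le> x \<and> x \<le> 1}"
  proof (rule set_eqI, rule iffI)
    fix p assume "p \<in> {p. p extreme_point_of K}"
    hence ep: "p extreme_point_of K" by simp
    hence "p \<in> P" unfolding K_def by (rule extreme_point_of_convex_hull)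
    hence pR: "p \<in> Rg d" using PR by auto
    obtain x y where pxy: "p = (x, y)" by (cases p)
    have xy: "x0 \<le> x" "x \<le> 1" "0 \<le> y" "y \<le> gf d x" using pR pxy Rgm by auto
    have noseg: "\<And>a b. a \<in> K \<Longrightarrow> b \<in> K \<Longrightarrow> p \<notin> open_segment a b"
      using ep by (simp add: extreme_point_of_def)
    show "p \<in> {(x0, 0), (1, 0)} \<union> {(x, gf d x) | x. x0 \<le> x \<and> x \<le> 1}"
    proof (cases "y = gf d x")
      case True thus ?thesis using pxy xy by auto
    next
      case False
      hence ylt: "y < gf d x" using xy by simp
      show ?thesis
      proof (cases "y > 0")
        case True
        define u where "u = y / gf d x"
        have u: "0 < u" "u < 1" using True ylt gfpos[OF xy(1)] by (simp_all add: u_def)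
        have "p \<in> open_segment (x, 0) (x, gf d x)"
        proof (rule oseg_intro[OF _ u])
          show "(x, 0) \<noteq> (x, gf d x)" using gfpos[OF xy(1)] by simp
          show "fst p = (1 - u) * fst (x, 0) + u * fst (x, gf d x)" using pxy by (simp add: algebra_simps)
          show "snd p = (1 - u) * snd (x, 0) + u * snd (x, gf d x)"
            using pxy gfpos[OF xy(1)] by (simp add: u_def)
        qed
        moreover have "(x, gf d x) \<in> K" using Cv xy PK by auto
        ultimately show ?thesis using noseg seg0 xy by blast
      next
        case False
        hence y0: "y = 0" using xy by simp
        show ?thesis
        proof (cases "x = x0 \<or> x = 1")
          case True thus ?thesis using pxy y0 by auto
        next
          case False
          hence xx: "x0 < x" "x < 1" using xy by auto
          define u where "u = (x - x0) / (1 - x0)"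
          have u: "0 < u" "u < 1" using xx x01 by (simp_all add: u_def divide_simps)
          have "p \<in> open_segment (x0, 0) (1, 0)"
          proof (rule oseg_intro[OF _ u])
            show "(x0, 0::real) \<noteq> (1, 0)" using x01 by simp
            show "fst p = (1 - u) * fst (x0, 0::real) + u * fst (1::real, 0::real)"
              using pxy lerp[OF nz refl, of x] by (simp add: u_def)
            show "snd p = (1 - u) * snd (x0, 0::real) + u * snd (1::real, 0::real)"
              using pxy y0 by simp
          qed
          thus ?thesis using noseg A1 A2 PK by blast
        qed
      qed
    qed
  next
    fix p assume pin: "p \<in> {(x0, 0), (1, 0)} \<union> {(x, gf d x) | x. x0 \<le> x \<and> x \<le> 1}"
    have pP: "p \<in> P" using pin A1 A2 Cv by auto
    have "\<forall>a\<in>K. \<forall>b\<in>K. p \<notin> open_segment a b"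
    proof (intro ballI notI)
      fix a b assume a: "a \<in> K" and b: "b \<in> K" and ps: "p \<in> open_segment a b"
      obtain u where u: "0 < u" "u < 1" and ab: "a \<noteq> b"
        and f: "fst p = (1-u) * fst a + u * fst b" and s: "snd p = (1-u) * snd a + u * snd b"
        using oseg_comp[OF ps] by blast
      have aR: "x0 \<le> fst a" "fst a \<le> 1" "0 \<le> snd a" "snd a \<le> gf d (fst a)"
        using a KR by (auto simp: Rg_def x0_def)
      have bR: "x0 \<le> fst b" "fst b \<le> 1" "0 \<le> snd b" "snd b \<le> gf d (fst b)"
        using b KR by (auto simp: Rg_def x0_def)
      have "a = b"
      proof -
        consider "p = (x0, 0)" | "p = (1, 0)" | x where "p = (x, gf d x)" "x0 \<le> x" "x \<le> 1"
          using pin by blast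
        thus ?thesis
        proof cases
          case 1
          have "fst a = x0 \<and> fst b = x0" using ext_lo[OF aR(1) bR(1) u] f 1 by simp
          moreover have "snd a = 0 \<and> snd b = 0" using ext_lo[OF aR(3) bR(3) u] s 1 by simp
          ultimately show ?thesis by (simp add: prod_eq_iff)
        next
          case 2
          have "fst a = 1 \<and> fst b = 1" using ext_hi[OF aR(2) bR(2) u] f 2 by simp
          moreover have "snd a = 0 \<and> snd b = 0" using ext_lo[OF aR(3) bR(3) u] s 2 by simp
          ultimately show ?thesis by (simp add: prod_eq_iff)
        next
          case 3
          have fx: "x = (1-u) * fst a + u * fst b" using f 3 by simp
          have sx: "gf d x = (1-u) * snd a + u * snd b" using s 3 by simp
          have "(1-u) * snd a + u * snd b \<le> (1-u) * gf d (fst a) + u * gf d (fst b)"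
            using aR bR u by (intro add_mono mult_left_mono) auto
          hence "gf d ((1-u) * fst a + u * fst b) \<le> (1-u) * gf d (fst a) + u * gf d (fst b)"
            using fx sx by simp
          hence fab: "fst a = fst b"
            using gf_strict[OF d1 _ _ u] aR(1) bR(1) by (simp add: x0_def)
          hence "x = fst a" using fx by (simp add: algebra_simps)
          hence "(1-u) * snd a + u * snd b = gf d (fst a)" using sx by simp
          hence "snd a = gf d (fst a) \<and> snd b = gf d (fst a)"
            using ext_hi[OF aR(4) _ u] bR(4) fab by simp
          thus ?thesis using fab by (simp add: prod_eq_iff)
        qed
      qed
      thus False using ab by simp
    qed
    thus "p \<in> {p. p extreme_point_of K}" using pP PK by (simp add: extreme_point_of_def subsetD)
  qed
  thus ?thesis unfolding K_def P_def x0_def gfd by simp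
qed


end
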